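(* Let $M$ be a monoid generated by a finite set $A$, and let $H$ be an $\mathcal{H}$-class of $M$. If the $\mathcal{R}$-class $R$ containing $H$ contains only finitely many $\mathcal{H}$-classes, then the Schützenberger group $\mathcal{G}(H)$ of $H$ is finitely generated and (equipped with a word metric with respect to a finite generating set) is quasi-isometric to the Schützenberger graph $\Gamma(R,A)$.
   Context: Green's relations on a monoid $M$: $x\mathcal{R}y$ iff $xM=yM$; $x\mathcal{L}y$ iff $Mx=My$; $\mathcal{H}=\mathcal{R}\cap\mathcal{L}$. For an $\mathcal{H}$-class $H$, let $\mathrm{Stab}(H)=\{s\in M: sH=H\}$ and $\sigma$ the congruence on it given by $x\,\sigma\,y$ iff $xh=yh$ for all $h\in H$; the (left) Schützenberger group is the group $\mathcal{G}(H)=\mathrm{Stab}(H)/\sigma$. It acts on the $\mathcal{R}$-class $R\supseteq H$ by $(s/\sigma)\cdot r=sr$. Semimetric space: a set with $d:X\times X\to\mathbb{R}^{\ge0}\cup\{\infty\}$, $d(x,y)=0$ iff $x=y$, triangle inequality (not necessarily symmetric). For a directed graph $\Gamma$ with vertex set $V$, edge set $E$, source and target maps $\iota,\tau$, define the semimetric space $\Gamma^*$ with point set $V\cup(E\times(0,1))$: for vertices $x,y$, $d(x,y)$ is the least number of edges in a directed path from $x$ to $y$ ($\infty$ if none); $d((e,\mu),y)=(1-\mu)+d(\tau(e),y)$; $d(x,(e,\mu))=d(x,\iota(e))+\mu$; $d((e,\mu),(f,\nu))=\nu-\mu$ if $e=f$ and $\nu\ge\mu$, and $d(\tau(e),\iota(f))+(1-\mu)+\nu$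 otherwise. The Schützenberger graph $\Gamma(R,A)$ is $\Delta^*$ where $\Delta$ is the directed graph with vertex set $R$ and an edge labelled $a$ from $x$ to $y$ whenever $x,y\in R$, $a\in A$, $xa=y$. A map $f:X\to X'$ of semimetric spaces is a quasi-isometry if there are constants $1\le\lambda<\infty$, $0<\epsilon<\infty$, $0\le\mu<\infty$ with $\frac1\lambda d(x,y)-\epsilon\le d'(f(x),f(y))\le\lambda d(x,y)+\epsilon$ for all $x,y$, and for every $x'\in X'$ some $x\in X$ with $\max(d'(x',f(x)),d'(f(x),x'))\le\mu$. A finitely generated group $G$ is regarded as a semimetric space via $d_S(g,h)=\min\{n:h=gs_1\cdots s_n, s_i\in S\}$ for a finite set $S$ generating $G$ as a monoid. *)

theory Defs
  imports Main "HOL-Library.Extended_Real"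
begin

definition greenR :: "'a::monoid_mult \<Rightarrow> 'a \<Rightarrow> bool" where
  "greenR x y \<longleftrightarrow> range (\<lambda>m. x * m) = range (\<lambda>m. y * m)"

definition greenL :: "'a::monoid_mult \<Rightarrow> 'a \<Rightarrow> bool" where
  "greenL x y \<longleftrightarrow> range (\<lambda>m. m * x) = range (\<lambda>m. m * y)"

definition greenH :: "'a::monoid_mult \<Rightarrow> 'a \<Rightarrow> bool" where
  "greenH x y \<longleftrightarrow> greenR x y \<and> greenL x y"

definition Rclass :: "'a::monoid_mult \<Rightarrow> 'a set" where
  "Rclass x = {y. greenR x y}"

definition Hclass :: "'a::monoid_mult \<Rightarrow> 'a set" where
  "Hclass x = {y. greenH x y}"

definition stab :: "'a::monoid_mult set \<Rightarrow> 'a set" where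
  "stab H = {s. (\<lambda>h. s * h) ` H = H}"

definition sigma_class :: "'a::monoid_mult set \<Rightarrow> 'a \<Rightarrow> 'a set" where
  "sigma_class H s = {t \<in> stab H. \<forall>h\<in>H. t * h = s * h}"

definition schgrp :: "'a::monoid_mult set \<Rightarrow> 'a set set" where
  "schgrp H = sigma_class H ` stab H"

definition sch_mult :: "'a::monoid_mult set \<Rightarrow> 'a set \<Rightarrow> 'a set \<Rightarrow> 'a set" where
  "sch_mult H X Y = sigma_class H ((SOME x. x \<in> X) * (SOME y. y \<in> Y))"

definition sch_one :: "'a::monoid_mult set \<Rightarrow> 'a set" where
  "sch_one H = sigma_class H 1"

definition sch_generates :: "'a::monoid_mult set \<Rightarrow> 'a set set \<Rightarrow> bool" where
  "sch_generates H S \<longleftrightarrow> S \<subseteq> schgrp H \<and>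
     (\<forall>g\<in>schgrp H. \<exists>ss. set ss \<subseteq> S \<and> g = foldl (sch_mult H) (sch_one H) ss)"

definition word_dist :: "'a::monoid_mult set \<Rightarrow> 'a set set \<Rightarrow> 'a set \<Rightarrow> 'a set \<Rightarrow> ereal" where
  "word_dist H S g h = Inf {ereal (real (length ss)) | ss. set ss \<subseteq> S \<and> h = foldl (sch_mult H) g ss}"

datatype ('v, 'e) gpt = GV 'v | GE 'e real

fun walk :: "'e set \<Rightarrow> ('e \<Rightarrow> 'v) \<Rightarrow> ('e \<Rightarrow> 'v) \<Rightarrow> nat \<Rightarrow> 'v \<Rightarrow> 'v \<Rightarrow> bool" where
  "walk E src tgt 0 x y = (x = y)"
| "walk E src tgt (Suc n) x y = (\<exists>e\<in>E. src e = x \<and> walk E src tgt n (tgt e) y)"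

text \<open>Least number of edges in a directed path (infinity if none).\<close>
definition vdist :: "'e set \<Rightarrow> ('e \<Rightarrow> 'v) \<Rightarrow> ('e \<Rightarrow> 'v) \<Rightarrow> 'v \<Rightarrow> 'v \<Rightarrow> ereal" where
  "vdist E src tgt x y = Inf {ereal (real n) | n. walk E src tgt n x y}"

definition gpoints :: "'v set \<Rightarrow> 'e set \<Rightarrow> ('v, 'e) gpt set" where
  "gpoints V E = GV ` V \<union> {GE e \<mu> | e \<mu>. e \<in> E \<and> 0 < \<mu> \<and> \<mu> < 1}"

fun gdist :: "'e set \<Rightarrow> ('e \<Rightarrow> 'v) \<Rightarrow> ('e \<Rightarrow> 'v) \<Rightarrow> ('v, 'e) gpt \<Rightarrow> ('v, 'e) gpt \<Rightarrow> ereal" where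
  "gdist E src tgt (GV x) (GV y) = vdist E src tgt x y"
| "gdist E src tgt (GE e \<mu>) (GV y) = ereal (1 - \<mu>) + vdist E src tgt (tgt e) y"
| "gdist E src tgt (GV x) (GE f \<nu>) = vdist E src tgt x (src f) + ereal \<nu>"
| "gdist E src tgt (GE e \<mu>) (GE f \<nu>) =
     (if e = f \<and> \<mu> \<le> \<nu> then ereal (\<nu> - \<mu>)
      else vdist E src tgt (tgt e) (src f) + ereal (1 - \<mu>) + ereal \<nu>)"

definition sch_edges :: "'a::monoid_mult set \<Rightarrow> 'a set \<Rightarrow> ('a \<times> 'a \<times> 'a) set" where
  "sch_edges A R = {(x, a, y). x \<in> R \<and> y \<in> R \<and> a \<in> A \<and> x * a = y}"

definition edge_tgt :: "'a \<times> 'a \<times> 'a \<Rightarrow> 'a" where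
  "edge_tgt e = snd (snd e)"

definition quasi_isometry ::
  "'x set \<Rightarrow> ('x \<Rightarrow> 'x \<Rightarrow> ereal) \<Rightarrow> 'y set \<Rightarrow> ('y \<Rightarrow> 'y \<Rightarrow> ereal) \<Rightarrow> ('x \<Rightarrow> 'y) \<Rightarrow> bool" where
  "quasi_isometry X d Y d' f \<longleftrightarrow> f ` X \<subseteq> Y \<and>
     (\<exists>lam \<epsilon> \<mu>::real. 1 \<le> lam \<and> 0 < \<epsilon> \<and> 0 \<le> \<mu> \<and>
        (\<forall>x\<in>X. \<forall>y\<in>X. ereal (1 / lam) * d x y - ereal \<epsilon> \<le> d' (f x) (f y)
                        \<and> d' (f x) (f y) \<le> ereal lam * d x y + ereal \<epsilon>) \<and>
        (\<forall>y'\<in>Y. \<exists>x\<in>X. max (d' y' (f x)) (d' (f x) y') \<le> ereal \<mu>))"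

end

theory Submission
  imports Defs
begin



lemma greenR_iff: "greenR x y \<longleftrightarrow> (\<exists>a. y = x*a) \<and> (\<exists>b. x = y*b)"
proof
  assume "greenR x y"
  hence e: "range (\<lambda>m. x * m) = range (\<lambda>m. y * m)" by (simp add: greenR_def)
  have "y \<in> range (\<lambda>m. y * m)" by (metis mult.right_neutral rangeI)
  moreover have "x \<in> range (\<lambda>m. x * m)" by (metis mult.right_neutral rangeI)
  ultimately show "(\<exists>a. y = x*a) \<and> (\<exists>b. x = y*b)" using e by auto
next
  assume "(\<exists>a. y = x*a) \<and> (\<exists>b. x = y*b)"
  then obtain a b where "y = x*a" "x = y*b" by blast
  thus "greenR x y" unfolding greenR_def
    by (auto simp: mult.assoc[symmetric]) (metis mult.assoc rangeI)+
qed

lemma greenL_iff: "greenL x y \<longleftrightarrow> (\<exists>a. y = a*x) \<and> (\<exists>b. x = b*y)"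
proof
  assume "greenL x y"
  hence e: "range (\<lambda>m. m * x) = range (\<lambda>m. m * y)" by (simp add: greenL_def)
  have "y \<in> range (\<lambda>m. m * y)" by (metis mult.left_neutral rangeI)
  moreover have "x \<in> range (\<lambda>m. m * x)" by (metis mult.left_neutral rangeI)
  ultimately show "(\<exists>a. y = a*x) \<and> (\<exists>b. x = b*y)" using e by auto
next
  assume "(\<exists>a. y = a*x) \<and> (\<exists>b. x = b*y)"
  then obtain a b where "y = a*x" "x = b*y" by blast
  thus "greenL x y" unfolding greenL_def
    by (auto simp: mult.assoc) (metis mult.assoc rangeI)+
qed

lemma greenR_trans: "greenR x y \<Longrightarrow> greenR y z \<Longrightarrow> greenR x z"
  by (simp add: greenR_def)
lemma greenR_sym: "greenR x y \<Longrightarrow> greenR y x"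
  by (simp add: greenR_def)
lemma greenR_refl: "greenR x x"
  by (simp add: greenR_def)
lemma greenL_trans: "greenL x y \<Longrightarrow> greenL y z \<Longrightarrow> greenL x z"
  by (simp add: greenL_def)
lemma greenL_sym: "greenL x y \<Longrightarrow> greenL y x"
  by (simp add: greenL_def)
lemma greenL_refl: "greenL x x"
  by (simp add: greenL_def)

locale grp_ctx =
  fixes A :: "'a::monoid_mult set" and h :: 'a
  assumes gen: "\<forall>m::'a. \<exists>ws. set ws \<subseteq> A \<and> m = prod_list ws"
begin

abbreviation "HH \<equiv> Hclass h"
abbreviation "RR \<equiv> Rclass h"

definition rep :: "'a set \<Rightarrow> 'a" where "rep X = (SOME x. x \<in> X)"
definition act :: "'a set \<Rightarrow> 'a \<Rightarrow> 'a" where "act X x = rep X * x"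

lemma memR: "y \<in> RR \<longleftrightarrow> (\<exists>a. y = h*a) \<and> (\<exists>b. h = y*b)"
  by (simp add: Rclass_def greenR_iff)

lemma memH: "y \<in> HH \<longleftrightarrow> ((\<exists>a. y = h*a) \<and> (\<exists>b. h = y*b)) \<and> ((\<exists>a. y = a*h) \<and> (\<exists>b. h = b*y))"
  by (simp add: Hclass_def greenH_def greenR_iff greenL_iff)

lemma H_sub_R: "HH \<subseteq> RR"
  by (auto simp: memH memR)

lemma h_H: "h \<in> HH"
  by (auto simp: memH intro: exI[of _ 1])

lemma h_R: "h \<in> RR" using h_H H_sub_R by blast

lemma stab_mem: "s \<in> stab HH \<Longrightarrow> x \<in> HH \<Longrightarrow> s*x \<in> HH"
  by (auto simp: stab_def)

lemma stab_1: "1 \<in> stab HH" by (simp add: stab_def)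

lemma stab_mult: "s \<in> stab HH \<Longrightarrow> t \<in> stab HH \<Longrightarrow> s*t \<in> stab HH"
proof -
  assume s: "s \<in> stab HH" and t: "t \<in> stab HH"
  have "(\<lambda>x. s*t*x) ` HH = (\<lambda>x. s*x) ` ((\<lambda>x. t*x) ` HH)"
    by (auto simp: image_image mult.assoc)
  also have "\<dots> = HH" using s t by (simp add: stab_def)
  finally show ?thesis by (simp add: stab_def)
qed

lemma stab_R: "s \<in> stab HH \<Longrightarrow> x \<in> RR \<Longrightarrow> s*x \<in> RR"
proof -
  assume s: "s \<in> stab HH" and x: "x \<in> RR"
  then obtain m p where m: "x = h*m" and p: "h = x*p" by (auto simp: memR)
  have "s*h \<in> HH" using stab_mem[OF s h_H] .
  then obtain a b where a: "s*h = h*a" and b: "h = s*h*b" by (auto simp: memH)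
  have "s*x = h*(a*m)" using m a by (simp add: mult.assoc[symmetric])
  moreover have "h = s*x*(p*b)" using b p by (simp add: mult.assoc)
  ultimately show ?thesis unfolding memR by blast
qed

lemma sigma_ext: "t \<in> sigma_class HH s \<Longrightarrow> x \<in> RR \<Longrightarrow> t*x = s*x"
proof -
  assume t: "t \<in> sigma_class HH s" and x: "x \<in> RR"
  then obtain m where m: "x = h*m" by (auto simp: memR)
  have "t*h = s*h" using t h_H by (auto simp: sigma_class_def)
  thus ?thesis using m by (metis mult.assoc)
qed

lemma sigma_self: "s \<in> stab HH \<Longrightarrow> s \<in> sigma_class HH s"
  by (simp add: sigma_class_def)

lemma rep_sigma: "s \<in> stab HH \<Longrightarrow> rep (sigma_class HH s) \<in> sigma_class HH s"
  unfolding rep_def by (rule someI, erule sigma_self)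

lemma act_sigma: "s \<in> stab HH \<Longrightarrow> x \<in> RR \<Longrightarrow> act (sigma_class HH s) x = s*x"
  unfolding act_def using rep_sigma sigma_ext by blast

lemma schgrp_rep: "X \<in> schgrp HH \<Longrightarrow> rep X \<in> stab HH \<and> X = sigma_class HH (rep X)"
proof -
  assume "X \<in> schgrp HH"
  then obtain s where s: "s \<in> stab HH" and X: "X = sigma_class HH s" by (auto simp: schgrp_def)
  have r: "rep X \<in> X" using rep_sigma[OF s] X by simp
  hence rs: "rep X \<in> stab HH" using X by (simp add: sigma_class_def)
  have "\<forall>x\<in>HH. rep X * x = s * x" using r X by (simp add: sigma_class_def)
  hence "sigma_class HH (rep X) = sigma_class HH s" by (auto simp: sigma_class_def)
  thus ?thesis using rs X by simp
qed

lemma rep_stab: "X \<in> schgrp HH \<Longrightarrow> rep X \<in> stab HH" using schgrp_rep by blast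

lemma act_R: "X \<in> schgrp HH \<Longrightarrow> x \<in> RR \<Longrightarrow> act X x \<in> RR"
  by (simp add: act_def rep_stab stab_R)

lemma act_H: "X \<in> schgrp HH \<Longrightarrow> x \<in> HH \<Longrightarrow> act X x \<in> HH"
  by (simp add: act_def rep_stab stab_mem)

lemma sigma_in: "s \<in> stab HH \<Longrightarrow> sigma_class HH s \<in> schgrp HH"
  by (simp add: schgrp_def)

lemma mult_in: "W \<in> schgrp HH \<Longrightarrow> U \<in> schgrp HH \<Longrightarrow> sch_mult HH W U \<in> schgrp HH"
  unfolding sch_mult_def by (rule sigma_in, rule stab_mult, fold rep_def, auto simp: rep_stab)

lemma act_mult: "W \<in> schgrp HH \<Longrightarrow> U \<in> schgrp HH \<Longrightarrow> x \<in> RR \<Longrightarrow>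
   act (sch_mult HH W U) x = act W (act U x)"
  unfolding sch_mult_def
  by (fold rep_def, subst act_sigma, auto simp: rep_stab stab_mult act_def mult.assoc)

lemma one_in: "sch_one HH \<in> schgrp HH"
  unfolding sch_one_def by (rule sigma_in, rule stab_1)

lemma act_one: "x \<in> RR \<Longrightarrow> act (sch_one HH) x = x"
  unfolding sch_one_def by (simp add: act_sigma stab_1)

lemma act_inj: "W \<in> schgrp HH \<Longrightarrow> U \<in> schgrp HH \<Longrightarrow> act W h = act U h \<Longrightarrow> W = U"
proof -
  assume W: "W \<in> schgrp HH" and U: "U \<in> schgrp HH" and e: "act W h = act U h"
  have "\<forall>x\<in>HH. rep W * x = rep U * x"
  proof
    fix x assume "x \<in> HH"
    then obtain m where "x = h*m" by (auto simp: memH)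
    thus "rep W * x = rep U * x" using e by (metis act_def mult.assoc)
  qed
  hence "sigma_class HH (rep W) = sigma_class HH (rep U)" by (auto simp: sigma_class_def)
  thus ?thesis using schgrp_rep[OF W] schgrp_rep[OF U] by simp
qed

lemma green_step:
  assumes x: "x \<in> HH" and y: "y \<in> HH" and u: "y = u*x" and w: "x = w*y" and z: "z \<in> HH"
  shows "u*z \<in> HH \<and> w*(u*z) = z"
proof -
  obtain m p where m: "z = x*m" and p: "x = z*p"
  proof -
    have "greenR h x" "greenR h z" using x z by (auto simp: Hclass_def greenH_def)
    hence "greenR x z" by (meson greenR_trans greenR_sym)
    thus ?thesis using that by (auto simp: greenR_iff)
  qed
  have uz: "u*z = y*m" using u m by (simp add: mult.assoc)
  have yuz: "y = u*z*p" using u p by (simp add: mult.assoc)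
  have bk: "w*(u*z) = z" using uz w m by (simp add: mult.assoc)
  have "greenR y (u*z)" using uz yuz by (auto simp: greenR_iff)
  moreover have "greenR h y" using y by (auto simp: Hclass_def greenH_def)
  ultimately have R1: "greenR h (u*z)" by (meson greenR_trans)
  have "greenL z (u*z)" unfolding greenL_iff using bk by metis
  moreover have "greenL h z" using z by (auto simp: Hclass_def greenH_def)
  ultimately have L1: "greenL h (u*z)" by (meson greenL_trans)
  show ?thesis using R1 L1 bk by (simp add: Hclass_def greenH_def)
qed

lemma H_trans: "x \<in> HH \<Longrightarrow> y \<in> HH \<Longrightarrow> \<exists>s\<in>stab HH. s*x = y"
proof -
  assume x: "x \<in> HH" and y: "y \<in> HH"
  have "greenL h x" "greenL h y" using x y by (auto simp: Hclass_def greenH_def)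
  hence "greenL x y" by (meson greenL_trans greenL_sym)
  then obtain u w where u: "y = u*x" and w: "x = w*y" by (auto simp: greenL_iff)
  have "(\<lambda>z. u*z) ` HH = HH"
  proof
    show "(\<lambda>z. u*z) ` HH \<subseteq> HH" using green_step[OF x y u w] by auto
    show "HH \<subseteq> (\<lambda>z. u*z) ` HH"
    proof
      fix z assume z: "z \<in> HH"
      from green_step[OF y x w u z] have "w*z \<in> HH" "u*(w*z) = z" by auto
      thus "z \<in> (\<lambda>z. u*z) ` HH" by (metis image_eqI)
    qed
  qed
  thus ?thesis using u by (auto simp: stab_def)
qed

lemma inverse: "W \<in> schgrp HH \<Longrightarrow> \<exists>W'\<in>schgrp HH. \<forall>x\<in>RR. act W' (act W x) = x"
proof -
  assume W: "W \<in> schgrp HH"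
  have "act W h \<in> HH" using act_H[OF W h_H] .
  from H_trans[OF this h_H] obtain s where s: "s \<in> stab HH" and e: "s * act W h = h" by blast
  show ?thesis
  proof (intro bexI ballI)
    fix x assume x: "x \<in> RR"
    then obtain m where m: "x = h*m" by (auto simp: memR)
    have "act (sigma_class HH s) (act W x) = s * act W x" using act_sigma[OF s act_R[OF W x]] .
    also have "\<dots> = s * act W h * m" using m by (simp add: act_def mult.assoc)
    also have "\<dots> = x" using e m by simp
    finally show "act (sigma_class HH s) (act W x) = x" .
  qed (rule sigma_in[OF s])
qed

lemma orbit: "v \<in> RR \<Longrightarrow> greenH v q \<Longrightarrow> \<exists>W\<in>schgrp HH. v = act W q"
proof -
  assume v: "v \<in> RR" and vq: "greenH v q"
  have "greenR h v" using v by (simp add: Rclass_def)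
  moreover have "greenR v q" using vq by (simp add: greenH_def)
  ultimately have q: "greenR h q" by (rule greenR_trans)
  then obtain m n where m: "q = h*m" and n: "h = q*n" by (auto simp: greenR_iff)
  obtain u w where u: "v = u*q" and w: "q = w*v" using vq by (auto simp: greenH_def greenL_iff)
  obtain b p where b: "v = h*b" and p: "h = v*p" using v by (auto simp: memR)
  define h' where "h' = v*n"
  have hm: "h'*m = v"
  proof -
    have "h'*m = u*(q*n)*m" by (simp add: h'_def u mult.assoc)
    also have "\<dots> = u*(h*m)" by (simp only: n[symmetric] mult.assoc)
    also have "\<dots> = v" by (simp only: m[symmetric] u[symmetric])
    finally show ?thesis .
  qed
  have e1: "h' = h*(b*n)" using b by (simp add: h'_def mult.assoc)
  have e2: "h = h'*(m*p)" using hm p by (simp add: mult.assoc[symmetric])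
  have G1: "greenR h h'"
    unfolding greenR_iff using e1 e2 by blast
  have e3: "h' = u*h" using u n by (simp add: h'_def mult.assoc)
  have e4: "h = w*h'" using w n by (simp add: h'_def mult.assoc)
  have G2: "greenL h h'"
    unfolding greenL_iff using e3 e4 by blast
  have "h' \<in> HH" using G1 G2 by (simp add: Hclass_def greenH_def)
  from H_trans[OF h_H this] obtain s where s: "s \<in> stab HH" and e: "s*h = h'" by blast
  have "q \<in> RR" using q by (simp add: Rclass_def)
  hence "act (sigma_class HH s) q = s*q" using act_sigma[OF s] by blast
  also have "\<dots> = s*h*m" by (simp only: m mult.assoc)
  also have "\<dots> = v" by (simp only: e hm)
  finally show ?thesis using sigma_in[OF s] by metis
qed

end



lemma inf_attained:
  fixes P :: "'b \<Rightarrow> bool" and g :: "'b \<Rightarrow> nat"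
  assumes "P k"
  shows "\<exists>x. P x \<and> Inf {ereal (real (g y)) | y. P y} = ereal (real (g x)) \<and> (\<forall>y. P y \<longrightarrow> g x \<le> g y)"
proof -
  define n where "n = (LEAST n. \<exists>y. P y \<and> g y = n)"
  have "\<exists>y. P y \<and> g y = n" unfolding n_def by (rule LeastI[of _ "g k"]) (use assms in blast)
  then obtain x where x: "P x" "g x = n" by blast
  have min: "\<forall>y. P y \<longrightarrow> g x \<le> g y" using x unfolding n_def by (metis (mono_tags, lifting) Least_le)
  have "Inf {ereal (real (g y)) | y. P y} = ereal (real (g x))"
    by (rule cInf_eq_minimum) (use x min in auto)
  thus ?thesis using x min by blast
qed

context grp_ctx begin

abbreviation "EE \<equiv> sch_edges A RR"
abbreviation "wk \<equiv> walk EE fst edge_tgt"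

lemma walk_Suc_iff: "wk (Suc n) x y \<longleftrightarrow> (\<exists>a\<in>A. x \<in> RR \<and> x*a \<in> RR \<and> wk n (x*a) y)"
  by (force simp: sch_edges_def edge_tgt_def)

declare walk.simps(2)[simp del]

lemma walk_append: "wk n x y \<Longrightarrow> wk m y z \<Longrightarrow> wk (n+m) x z"
proof (induction n arbitrary: x)
  case 0 thus ?case by simp
next
  case (Suc n) thus ?case unfolding walk_Suc_iff add_Suc by blast
qed

lemma walk_prefix: "x \<in> RR \<Longrightarrow> set ws \<subseteq> A \<Longrightarrow> x * prod_list ws \<in> RR \<Longrightarrow> wk (length ws) x (x * prod_list ws)"
proof (induction ws arbitrary: x)
  case Nil thus ?case by simp
next
  case (Cons a ws)
  from Cons.prems(1) obtain c where c: "x = h*c" by (auto simp: memR)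
  from Cons.prems(3) obtain d where d: "h = x*(a*prod_list ws)*d" by (auto simp: memR)
  have "x*a = h*(c*a)" using c by (simp add: mult.assoc)
  moreover have "h = x*a*(prod_list ws * d)" using d by (simp add: mult.assoc)
  ultimately have xa: "x*a \<in> RR" unfolding memR by blast
  have "wk (length ws) (x*a) (x*a*prod_list ws)"
    using Cons.IH[OF xa] Cons.prems by (simp add: mult.assoc)
  thus ?case using xa Cons.prems by (auto simp: walk_Suc_iff mult.assoc)
qed

lemma walk_exists: "x \<in> RR \<Longrightarrow> y \<in> RR \<Longrightarrow> \<exists>n. wk n x y"
proof -
  assume x: "x \<in> RR" and y: "y \<in> RR"
  obtain a where a: "y = h*a" using y by (auto simp: memR)
  obtain b where b: "h = x*b" using x by (auto simp: memR)
  obtain ws where ws: "set ws \<subseteq> A" "b*a = prod_list ws" using gen by blast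
  have "y = x * prod_list ws" using a b ws by (simp add: mult.assoc)
  thus ?thesis using walk_prefix[OF x ws(1)] y by metis
qed

lemma walk_R: "wk n x y \<Longrightarrow> x \<in> RR \<Longrightarrow> y \<in> RR"
  by (induction n arbitrary: x) (auto simp: walk_Suc_iff)

lemma walk_stab: "s \<in> stab HH \<Longrightarrow> wk n x y \<Longrightarrow> wk n (s*x) (s*y)"
proof (induction n arbitrary: x)
  case 0 thus ?case by simp
next
  case (Suc n)
  then obtain a where a: "a \<in> A" "x \<in> RR" "x*a \<in> RR" "wk n (x*a) y" by (auto simp: walk_Suc_iff)
  have "s*x \<in> RR" "s*x*a \<in> RR" using stab_R[OF Suc.prems(1)] a by (auto simp: mult.assoc)
  moreover have "wk n (s*x*a) (s*y)" using Suc.IH[OF Suc.prems(1) a(4)] by (simp add: mult.assoc)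
  ultimately show ?case using a by (auto simp: walk_Suc_iff)
qed

lemma walk_act: "W \<in> schgrp HH \<Longrightarrow> wk n x y \<Longrightarrow> wk n (act W x) (act W y)"
  unfolding act_def by (rule walk_stab[OF rep_stab])

lemma vdist_le: "wk n x y \<Longrightarrow> vdist EE fst edge_tgt x y \<le> ereal (real n)"
  unfolding vdist_def by (rule Inf_lower) blast

lemma foldl_in: "X \<in> schgrp HH \<Longrightarrow> set zs \<subseteq> schgrp HH \<Longrightarrow> foldl (sch_mult HH) X zs \<in> schgrp HH"
  by (induction zs arbitrary: X) (auto simp: mult_in)

lemma foldl_act: "W \<in> schgrp HH \<Longrightarrow> set ws \<subseteq> schgrp HH \<Longrightarrow> x \<in> RR \<Longrightarrow>
  act (foldl (sch_mult HH) W ws) x = act W (act (foldl (sch_mult HH) (sch_one HH) ws) x)"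
proof (induction ws arbitrary: W)
  case Nil thus ?case by (simp add: act_one)
next
  case (Cons s ws)
  have s: "s \<in> schgrp HH" and ws: "set ws \<subseteq> schgrp HH" using Cons.prems by auto
  have r: "act (foldl (sch_mult HH) (sch_one HH) ws) x \<in> RR"
    using act_R[OF foldl_in[OF one_in ws] Cons.prems(3)] .
  have "act (foldl (sch_mult HH) W (s#ws)) x = act (sch_mult HH W s) (act (foldl (sch_mult HH) (sch_one HH) ws) x)"
    using Cons.IH[OF mult_in[OF Cons.prems(1) s] ws Cons.prems(3)] by simp
  also have "\<dots> = act W (act s (act (foldl (sch_mult HH) (sch_one HH) ws) x))"
    using act_mult[OF Cons.prems(1) s r] .
  also have "act (foldl (sch_mult HH) (sch_one HH) (s#ws)) x = act s (act (foldl (sch_mult HH) (sch_one HH) ws) x)"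
    using Cons.IH[OF mult_in[OF one_in s] ws Cons.prems(3)] act_mult[OF one_in s r]
      act_one[OF act_R[OF s r]] by simp
  ultimately show ?case by simp
qed

lemma qa_R: "X \<in> schgrp HH \<Longrightarrow> q \<in> RR \<Longrightarrow> act X q * a \<in> RR \<Longrightarrow> q*a \<in> RR"
proof -
  assume X: "X \<in> schgrp HH" and q: "q \<in> RR" and qa: "act X q * a \<in> RR"
  obtain W' where W': "W' \<in> schgrp HH" "\<forall>x\<in>RR. act W' (act X x) = x" using inverse[OF X] by blast
  have "q*a = act W' (act X q) * a" using W' q by simp
  also have "\<dots> = rep W' * (act X q * a)" by (simp add: act_def mult.assoc)
  finally show ?thesis using stab_R[OF rep_stab[OF W'(1)] qa] by simp
qed

end



locale grp_fin = grp_ctx +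
  assumes finA: "finite A" and finH: "finite (Hclass ` Rclass h)"
begin

definition qrep :: "'a set \<Rightarrow> 'a" where "qrep C = (SOME q. q \<in> C)"
definition Qs :: "'a set" where "Qs = insert h (qrep ` (Hclass ` RR))"

lemma Qs_fin: "finite Qs" unfolding Qs_def using finH by simp

lemma Hclass_self: "v \<in> Hclass v"
  by (simp add: Hclass_def greenH_def greenR_refl greenL_refl)

lemma Qs_R: "Qs \<subseteq> RR"
proof
  fix q assume "q \<in> Qs"
  then consider "q = h" | v where "v \<in> RR" "q = qrep (Hclass v)" unfolding Qs_def by blast
  thus "q \<in> RR"
  proof cases
    case 1 thus ?thesis using h_R by simp
  next
    case 2
    have "q \<in> Hclass v" unfolding 2 qrep_def by (rule someI, rule Hclass_self)
    hence "greenR v q" by (simp add: Hclass_def greenH_def)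
    moreover have "greenR h v" using 2 by (simp add: Rclass_def)
    ultimately show ?thesis by (simp add: Rclass_def greenR_trans[of h v q])
  qed
qed

lemma cover: "v \<in> RR \<Longrightarrow> \<exists>q\<in>Qs. \<exists>W\<in>schgrp HH. v = act W q"
proof -
  assume v: "v \<in> RR"
  define q where "q = qrep (Hclass v)"
  have "q \<in> Hclass v" unfolding q_def qrep_def by (rule someI, rule Hclass_self)
  hence "greenH v q" by (simp add: Hclass_def)
  from orbit[OF v this] have "\<exists>W\<in>schgrp HH. v = act W q" .
  moreover have "q \<in> Qs" unfolding Qs_def q_def using v by blast
  ultimately show ?thesis by blast
qed

definition Zf :: "'a \<Rightarrow> 'a \<Rightarrow> 'a set" where
  "Zf q a = (SOME Z. Z \<in> schgrp HH \<and> (\<exists>q'\<in>Qs. q*a = act Z q'))"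
definition Zset :: "'a set set" where
  "Zset = {Zf q a | q a. q \<in> Qs \<and> a \<in> A \<and> q*a \<in> RR}"

lemma Zf_prop: "q*a \<in> RR \<Longrightarrow> Zf q a \<in> schgrp HH \<and> (\<exists>q'\<in>Qs. q*a = act (Zf q a) q')"
  unfolding Zf_def by (rule someI_ex) (use cover in blast)

lemma Zset_fin: "finite Zset"
proof -
  have "Zset \<subseteq> (\<lambda>(q,a). Zf q a) ` (Qs \<times> A)" unfolding Zset_def by auto
  thus ?thesis using Qs_fin finA finite_subset by blast
qed

lemma Zset_sub: "Zset \<subseteq> schgrp HH" unfolding Zset_def using Zf_prop by blast

definition Tf :: "'a \<Rightarrow> 'a set" where
  "Tf q = (SOME T. T \<in> schgrp HH \<and> act T h = q)"
definition Tset :: "'a set set" where "Tset = Tf ` (Qs \<inter> HH)"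

lemma Tf_prop: "q \<in> HH \<Longrightarrow> Tf q \<in> schgrp HH \<and> act (Tf q) h = q"
proof -
  assume q: "q \<in> HH"
  from H_trans[OF h_H q] obtain s where s: "s \<in> stab HH" "s*h = q" by blast
  have "sigma_class HH s \<in> schgrp HH \<and> act (sigma_class HH s) h = q"
    using sigma_in[OF s(1)] act_sigma[OF s(1) h_R] s(2) by simp
  thus ?thesis unfolding Tf_def by (rule someI)
qed

lemma Tset_fin: "finite Tset" unfolding Tset_def using Qs_fin by simp
lemma Tset_sub: "Tset \<subseteq> schgrp HH" unfolding Tset_def using Tf_prop by blast

definition S0 :: "'a set set" where "S0 = Zset \<union> Tset"
lemma S0_fin: "finite S0" unfolding S0_def using Zset_fin Tset_fin by simp
lemma S0_sub: "S0 \<subseteq> schgrp HH" unfolding S0_def using Zset_sub Tset_sub by simp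

lemma walk_lift:
  "wk n v w \<Longrightarrow> X \<in> schgrp HH \<Longrightarrow> q \<in> Qs \<Longrightarrow> v = act X q \<Longrightarrow>
   \<exists>zs q'. set zs \<subseteq> Zset \<and> length zs = n \<and> q' \<in> Qs \<and> w = act (foldl (sch_mult HH) X zs) q'"
proof (induction n arbitrary: v X q)
  case 0 thus ?case by (intro exI[of _ "[]"] exI[of _ q]) simp
next
  case (Suc n)
  obtain a where a: "a \<in> A" "v \<in> RR" "v*a \<in> RR" "wk n (v*a) w"
    using Suc.prems(1) unfolding walk_Suc_iff by blast
  have qR: "q \<in> RR" using Suc.prems(3) Qs_R by blast
  have qa: "q*a \<in> RR" using qa_R[OF Suc.prems(2) qR] a(3) Suc.prems(4) by simp
  define Z where "Z = Zf q a"
  obtain q'' where Z: "Z \<in> schgrp HH" "q'' \<in> Qs" "q*a = act Z q''"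
    using Zf_prop[OF qa] unfolding Z_def by blast
  have ZZ: "Z \<in> Zset" unfolding Zset_def Z_def using Suc.prems(3) a(1) qa by blast
  have q''R: "q'' \<in> RR" using Z(2) Qs_R by blast
  have "v*a = act X (q*a)" using Suc.prems(4) by (simp add: act_def mult.assoc)
  also have "\<dots> = act (sch_mult HH X Z) q''" using Z(3) act_mult[OF Suc.prems(2) Z(1) q''R] by simp
  finally have va: "v*a = act (sch_mult HH X Z) q''" .
  obtain zs q' where zs: "set zs \<subseteq> Zset" "length zs = n" "q' \<in> Qs"
      "w = act (foldl (sch_mult HH) (sch_mult HH X Z) zs) q'"
    using Suc.IH[OF a(4) mult_in[OF Suc.prems(2) Z(1)] Z(2) va] by blast
  show ?case
    by (rule exI[of _ "Z#zs"], rule exI[of _ q']) (use zs ZZ in auto)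
qed

lemma endpoint:
  assumes X: "X \<in> schgrp HH" and Y: "Y \<in> schgrp HH" and w: "wk n (act X h) (act Y h)"
  shows "\<exists>zs. set zs \<subseteq> S0 \<and> length zs = Suc n \<and> Y = foldl (sch_mult HH) X zs"
proof -
  have hQ: "h \<in> Qs" unfolding Qs_def by simp
  obtain zs q' where zs: "set zs \<subseteq> Zset" "length zs = n" "q' \<in> Qs"
      "act Y h = act (foldl (sch_mult HH) X zs) q'"
    using walk_lift[OF w X hQ refl] by blast
  define X' where "X' = foldl (sch_mult HH) X zs"
  have X': "X' \<in> schgrp HH" unfolding X'_def using foldl_in[OF X] zs(1) Zset_sub by blast
  obtain W' where W': "W' \<in> schgrp HH" "\<forall>x\<in>RR. act W' (act X' x) = x" using inverse[OF X'] by blast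
  have q'R: "q' \<in> RR" using zs(3) Qs_R by blast
  have "q' = act W' (act Y h)" using W' q'R zs(4) unfolding X'_def by simp
  hence q'H: "q' \<in> HH" using act_H[OF W'(1) act_H[OF Y h_H]] by simp
  have T: "Tf q' \<in> schgrp HH" "act (Tf q') h = q'" using Tf_prop[OF q'H] by auto
  have "act (sch_mult HH X' (Tf q')) h = act Y h"
    using act_mult[OF X' T(1) h_R] T(2) zs(4) unfolding X'_def by simp
  hence "Y = sch_mult HH X' (Tf q')" using act_inj[OF mult_in[OF X' T(1)] Y] by simp
  hence "Y = foldl (sch_mult HH) X (zs @ [Tf q'])" unfolding X'_def by simp
  moreover have "Tf q' \<in> S0" unfolding S0_def Tset_def using zs(3) q'H by blast
  ultimately show ?thesis using zs(1,2) unfolding S0_def by (intro exI[of _ "zs @ [Tf q']"]) auto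
qed

lemma generates: "sch_generates HH S0"
  unfolding sch_generates_def
proof (intro conjI ballI)
  show "S0 \<subseteq> schgrp HH" by (rule S0_sub)
  fix g assume g: "g \<in> schgrp HH"
  obtain n where "wk n h (act g h)" using walk_exists[OF h_R act_R[OF g h_R]] by blast
  hence "wk n (act (sch_one HH) h) (act g h)" using act_one[OF h_R] by simp
  from endpoint[OF one_in g this] show "\<exists>ss. set ss \<subseteq> S0 \<and> g = foldl (sch_mult HH) (sch_one HH) ss" by blast
qed

end



locale grp_S = grp_fin +
  fixes S :: "'a set set"
  assumes finS: "finite S" and genS: "sch_generates (Hclass h) S"
begin

lemma S_sub: "S \<subseteq> schgrp HH" using genS by (simp add: sch_generates_def)

definition wsf :: "'a set \<Rightarrow> 'a set list" where
  "wsf z = (SOME ss. set ss \<subseteq> S \<and> z = foldl (sch_mult HH) (sch_one HH) ss)"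

lemma wsf_prop: "z \<in> schgrp HH \<Longrightarrow> set (wsf z) \<subseteq> S \<and> z = foldl (sch_mult HH) (sch_one HH) (wsf z)"
  unfolding wsf_def by (rule someI_ex) (use genS in \<open>auto simp: sch_generates_def\<close>)

definition Kmax :: nat where "Kmax = Max (insert 0 ((\<lambda>z. length (wsf z)) ` S0))"

lemma Kmax_ge: "z \<in> S0 \<Longrightarrow> length (wsf z) \<le> Kmax"
  unfolding Kmax_def using S0_fin by (intro Max_ge) auto

lemma expand: "X \<in> schgrp HH \<Longrightarrow> set zs \<subseteq> S0 \<Longrightarrow>
  foldl (sch_mult HH) X zs = foldl (sch_mult HH) X (concat (map wsf zs))"
proof (induction zs arbitrary: X)
  case Nil thus ?case by simp
next
  case (Cons z zs)
  have z: "z \<in> schgrp HH" using Cons.prems S0_sub by auto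
  have w: "set (wsf z) \<subseteq> S" "z = foldl (sch_mult HH) (sch_one HH) (wsf z)" using wsf_prop[OF z] by auto
  have wsub: "set (wsf z) \<subseteq> schgrp HH" using w(1) S_sub by blast
  have F: "foldl (sch_mult HH) X (wsf z) \<in> schgrp HH" using foldl_in[OF Cons.prems(1) wsub] .
  have "act (foldl (sch_mult HH) X (wsf z)) h = act X (act z h)"
    using foldl_act[OF Cons.prems(1) wsub h_R] w(2) by simp
  also have "\<dots> = act (sch_mult HH X z) h" using act_mult[OF Cons.prems(1) z h_R] by simp
  finally have eq: "sch_mult HH X z = foldl (sch_mult HH) X (wsf z)"
    using act_inj[OF F mult_in[OF Cons.prems(1) z]] by simp
  have "foldl (sch_mult HH) X (z#zs) = foldl (sch_mult HH) (foldl (sch_mult HH) X (wsf z)) zs"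
    using eq by simp
  also have "\<dots> = foldl (sch_mult HH) (foldl (sch_mult HH) X (wsf z)) (concat (map wsf zs))"
    using Cons.IH[OF F] Cons.prems(2) by simp
  finally show ?case by simp
qed

lemma concat_len: "set zs \<subseteq> S0 \<Longrightarrow> length (concat (map wsf zs)) \<le> Kmax * length zs"
proof (induction zs)
  case Nil thus ?case by simp
next
  case (Cons z zs) thus ?case using Kmax_ge[of z] by simp
qed

lemma concat_sub: "set zs \<subseteq> S0 \<Longrightarrow> set (concat (map wsf zs)) \<subseteq> S"
  using wsf_prop S0_sub by fastforce

lemma reach:
  assumes X: "X \<in> schgrp HH" and Y: "Y \<in> schgrp HH" and w: "wk n (act X h) (act Y h)"
  shows "\<exists>ss. set ss \<subseteq> S \<and> length ss \<le> Kmax * Suc n \<and> Y = foldl (sch_mult HH) X ss"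
proof -
  obtain zs where zs: "set zs \<subseteq> S0" "length zs = Suc n" "Y = foldl (sch_mult HH) X zs"
    using endpoint[OF X Y w] by blast
  show ?thesis
    by (rule exI[of _ "concat (map wsf zs)"])
       (use zs concat_len concat_sub expand[OF X zs(1)] in metis)
qed

definition wf :: "'a set \<Rightarrow> 'a list" where
  "wf s = (SOME ws. set ws \<subseteq> A \<and> act s h = h * prod_list ws)"

lemma wf_prop: "s \<in> schgrp HH \<Longrightarrow> set (wf s) \<subseteq> A \<and> act s h = h * prod_list (wf s)"
proof -
  assume s: "s \<in> schgrp HH"
  have "act s h \<in> RR" using act_H[OF s h_H] H_sub_R by blast
  then obtain m where m: "act s h = h*m" unfolding memR by blast
  obtain ws where ws: "set ws \<subseteq> A" "m = prod_list ws" using gen by blast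
  show ?thesis unfolding wf_def by (rule someI[of _ ws]) (use m ws in simp)
qed

definition CC :: nat where "CC = Max (insert 0 ((\<lambda>s. length (wf s)) ` S))"

lemma CC_ge: "s \<in> S \<Longrightarrow> length (wf s) \<le> CC"
  unfolding CC_def using finS by (intro Max_ge) auto

lemma upper: "X \<in> schgrp HH \<Longrightarrow> set ss \<subseteq> S \<Longrightarrow>
   \<exists>n. n \<le> CC * length ss \<and> wk n (act X h) (act (foldl (sch_mult HH) X ss) h)"
proof (induction ss arbitrary: X)
  case Nil thus ?case by (intro exI[of _ 0]) (simp add: walk.simps(1))
next
  case (Cons s ss)
  have s: "s \<in> schgrp HH" using Cons.prems S_sub by auto
  have X': "sch_mult HH X s \<in> schgrp HH" using mult_in[OF Cons.prems(1) s] .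
  have ws: "set (wf s) \<subseteq> A" "act s h = h * prod_list (wf s)" using wf_prop[OF s] by auto
  have "act (sch_mult HH X s) h = act X (act s h)" using act_mult[OF Cons.prems(1) s h_R] .
  also have "\<dots> = act X h * prod_list (wf s)" using ws(2) by (simp add: act_def mult.assoc)
  finally have e: "act (sch_mult HH X s) h = act X h * prod_list (wf s)" .
  have w1: "wk (length (wf s)) (act X h) (act (sch_mult HH X s) h)"
    using walk_prefix[OF act_R[OF Cons.prems(1) h_R] ws(1)] e act_R[OF X' h_R] by simp
  obtain n where n: "n \<le> CC * length ss" "wk n (act (sch_mult HH X s) h) (act (foldl (sch_mult HH) (sch_mult HH X s) ss) h)"
    using Cons.IH[OF X'] Cons.prems(2) by auto
  have "wk (length (wf s) + n) (act X h) (act (foldl (sch_mult HH) X (s#ss)) h)"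
    using walk_append[OF w1 n(2)] by simp
  moreover have "length (wf s) + n \<le> CC * length (s#ss)" using n(1) CC_ge[of s] Cons.prems(2) by simp
  ultimately show ?case by blast
qed

lemma dists:
  assumes X: "X \<in> schgrp HH" and Y: "Y \<in> schgrp HH"
  shows "\<exists>N n. word_dist HH S X Y = ereal (real N) \<and> vdist EE fst edge_tgt (act X h) (act Y h) = ereal (real n)
     \<and> N \<le> Kmax * Suc n \<and> n \<le> CC * N"
proof -
  obtain k where k: "wk k (act X h) (act Y h)" using walk_exists[OF act_R[OF X h_R] act_R[OF Y h_R]] by blast
  obtain n where n: "wk n (act X h) (act Y h)"
     "Inf {ereal (real n) | n. wk n (act X h) (act Y h)} = ereal (real n)"
     "\<forall>m. wk m (act X h) (act Y h) \<longrightarrow> n \<le> m"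
    using inf_attained[of "\<lambda>n. wk n (act X h) (act Y h)" k "\<lambda>n. n"] k by auto
  obtain ss where ss: "set ss \<subseteq> S" "length ss \<le> Kmax * Suc n" "Y = foldl (sch_mult HH) X ss"
    using reach[OF X Y n(1)] by blast
  obtain ss0 where ss0: "set ss0 \<subseteq> S \<and> Y = foldl (sch_mult HH) X ss0"
     "Inf {ereal (real (length ss)) | ss. set ss \<subseteq> S \<and> Y = foldl (sch_mult HH) X ss} = ereal (real (length ss0))"
     "\<forall>t. set t \<subseteq> S \<and> Y = foldl (sch_mult HH) X t \<longrightarrow> length ss0 \<le> length t"
    using inf_attained[of "\<lambda>ss. set ss \<subseteq> S \<and> Y = foldl (sch_mult HH) X ss" ss length] ss by auto
  obtain m where m: "m \<le> CC * length ss0" "wk m (act X h) (act Y h)"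
    using upper[OF X] ss0(1) by metis
  have "n \<le> m" using n(3) m(2) by blast
  moreover have "length ss0 \<le> length ss" using ss0(3) ss by blast
  ultimately show ?thesis
    using n(2) ss0(2) ss(2) m(1) unfolding word_dist_def vdist_def
    by (intro exI[of _ "length ss0"] exI[of _ n]) auto
qed

end



lemma real_ineq:
  fixes N n K C :: nat and lam :: real
  assumes "N \<le> K * Suc n" "n \<le> C * N" "lam = real (max 1 (max C K))"
  shows "real N / lam - (real K + 1) \<le> real n \<and> real n \<le> lam * real N + (real K + 1)"
proof
  have l1: "lam \<ge> 1" "lam \<ge> real K" "lam \<ge> real C" using assms(3) by auto
  have "real N \<le> real K * (real n + 1)" using assms(1) by (metis of_nat_Suc of_nat_le_iff of_nat_mult add.commute)
  also have "\<dots> \<le> lam * (real n + 1)" using l1 by (intro mult_right_mono) auto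
  finally have "real N / lam \<le> real n + 1" using l1 by (simp add: divide_le_eq mult.commute)
  thus "real N / lam - (real K + 1) \<le> real n" by simp
  have "real n \<le> real C * real N" using assms(2) by (metis of_nat_le_iff of_nat_mult)
  also have "\<dots> \<le> lam * real N" using l1 by (intro mult_right_mono) auto
  finally show "real n \<le> lam * real N + (real K + 1)" by simp
qed

context grp_S begin

definition Pairs :: "('a \<times> 'a) set" where
  "Pairs = (\<lambda>q. (q,h)) ` Qs \<union> (\<lambda>q. (h,q)) ` Qs \<union> (\<lambda>(q,a). (q*a,h)) ` {(q,a). q \<in> Qs \<and> a \<in> A \<and> q*a \<in> RR}"

lemma Pairs_fin: "finite Pairs"
proof -
  have "{(q,a). q \<in> Qs \<and> a \<in> A \<and> q*a \<in> RR} \<subseteq> Qs \<times> A" by auto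
  hence "finite {(q,a). q \<in> Qs \<and> a \<in> A \<and> q*a \<in> RR}" using Qs_fin finA finite_subset by blast
  thus ?thesis unfolding Pairs_def using Qs_fin by simp
qed

lemma Pairs_R: "p \<in> Pairs \<Longrightarrow> fst p \<in> RR \<and> snd p \<in> RR"
  unfolding Pairs_def using Qs_R h_R by auto

definition Lf :: "'a \<times> 'a \<Rightarrow> nat" where "Lf p = (LEAST n. wk n (fst p) (snd p))"
definition Mu :: nat where "Mu = Max (insert 0 (Lf ` Pairs))"

lemma pair_walk: "p \<in> Pairs \<Longrightarrow> wk (Lf p) (fst p) (snd p) \<and> Lf p \<le> Mu"
proof
  assume p: "p \<in> Pairs"
  show "wk (Lf p) (fst p) (snd p)" unfolding Lf_def
    by (rule LeastI_ex) (use walk_exists Pairs_R[OF p] in blast)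
  show "Lf p \<le> Mu" unfolding Mu_def using Pairs_fin p by (intro Max_ge) auto
qed

lemma near_vertex: "x \<in> RR \<Longrightarrow> \<exists>q\<in>Qs. \<exists>W\<in>schgrp HH. x = act W q \<and>
   vdist EE fst edge_tgt x (act W h) \<le> ereal (real Mu) \<and> vdist EE fst edge_tgt (act W h) x \<le> ereal (real Mu)"
proof -
  assume x: "x \<in> RR"
  obtain q W where q: "q \<in> Qs" "W \<in> schgrp HH" "x = act W q" using cover[OF x] by blast
  have p1: "(q,h) \<in> Pairs" "(h,q) \<in> Pairs" unfolding Pairs_def using q(1) by auto
  have w1: "wk (Lf (q,h)) x (act W h)" "Lf (q,h) \<le> Mu"
    using pair_walk[OF p1(1)] walk_act[OF q(2)] q(3) by auto
  have w2: "wk (Lf (h,q)) (act W h) x" "Lf (h,q) \<le> Mu"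
    using pair_walk[OF p1(2)] walk_act[OF q(2)] q(3) by auto
  have "vdist EE fst edge_tgt x (act W h) \<le> ereal (real Mu)"
    using vdist_le[OF w1(1)] w1(2) by (meson ereal_less_eq(3) of_nat_le_iff order_trans)
  moreover have "vdist EE fst edge_tgt (act W h) x \<le> ereal (real Mu)"
    using vdist_le[OF w2(1)] w2(2) by (meson ereal_less_eq(3) of_nat_le_iff order_trans)
  ultimately show ?thesis using q by blast
qed

lemma near_edge_tgt: "q \<in> Qs \<Longrightarrow> W \<in> schgrp HH \<Longrightarrow> a \<in> A \<Longrightarrow> act W q * a \<in> RR \<Longrightarrow>
   vdist EE fst edge_tgt (act W q * a) (act W h) \<le> ereal (real Mu)"
proof -
  assume q: "q \<in> Qs" and W: "W \<in> schgrp HH" and a: "a \<in> A" and qa: "act W q * a \<in> RR"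
  have qaR: "q*a \<in> RR" using qa_R[OF W _ qa] q Qs_R by blast
  have p: "(q*a,h) \<in> Pairs" unfolding Pairs_def using q a qaR
    by (intro UnI2 image_eqI[of _ _ "(q,a)"]) auto
  have "wk (Lf (q*a,h)) (act W (q*a)) (act W h)" using pair_walk[OF p] walk_act[OF W] by auto
  hence "vdist EE fst edge_tgt (act W q * a) (act W h) \<le> ereal (real (Lf (q*a,h)))"
    using vdist_le by (simp add: act_def mult.assoc)
  thus ?thesis using pair_walk[OF p] by (meson ereal_less_eq(3) of_nat_le_iff order_trans)
qed

lemma qi: "quasi_isometry (schgrp HH) (word_dist HH S) (gpoints RR EE) (gdist EE fst edge_tgt) (\<lambda>X. GV (act X h))"
proof -
  have s1: "(\<lambda>X. GV (act X h)) ` schgrp HH \<subseteq> gpoints RR EE"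
    unfolding gpoints_def using act_R h_R by blast
  have s2: "1 \<le> real (max 1 (max CC Kmax))" by simp
  have s3: "0 < real Kmax + 1" by simp
  have s4: "0 \<le> real Mu + 1" by simp
  have s5: "\<forall>x\<in>schgrp HH. \<forall>y\<in>schgrp HH.
       ereal (1 / real (max 1 (max CC Kmax))) * word_dist HH S x y - ereal (real Kmax + 1)
       \<le> gdist EE fst edge_tgt (GV (act x h)) (GV (act y h)) \<and>
       gdist EE fst edge_tgt (GV (act x h)) (GV (act y h))
       \<le> ereal (real (max 1 (max CC Kmax))) * word_dist HH S x y + ereal (real Kmax + 1)"
  proof (intro ballI)
    fix X Y assume X: "X \<in> schgrp HH" and Y: "Y \<in> schgrp HH"
    obtain N n where d: "word_dist HH S X Y = ereal (real N)"
       "vdist EE fst edge_tgt (act X h) (act Y h) = ereal (real n)" "N \<le> Kmax * Suc n" "n \<le> CC * N"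
      using dists[OF X Y] by blast
    have r: "real N / real (max 1 (max CC Kmax)) - (real Kmax + 1) \<le> real n \<and>
             real n \<le> real (max 1 (max CC Kmax)) * real N + (real Kmax + 1)"
      by (rule real_ineq[OF d(3) d(4)]) simp
    show "ereal (1 / real (max 1 (max CC Kmax))) * word_dist HH S X Y - ereal (real Kmax + 1)
       \<le> gdist EE fst edge_tgt (GV (act X h)) (GV (act Y h)) \<and>
       gdist EE fst edge_tgt (GV (act X h)) (GV (act Y h))
       \<le> ereal (real (max 1 (max CC Kmax))) * word_dist HH S X Y + ereal (real Kmax + 1)"
      using r by (simp add: d(1) d(2))
  qed
  have s6: "\<forall>y'\<in>gpoints RR EE. \<exists>x\<in>schgrp HH.
       max (gdist EE fst edge_tgt y' (GV (act x h))) (gdist EE fst edge_tgt (GV (act x h)) y')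
       \<le> ereal (real Mu + 1)"
  proof
    fix y' assume "y' \<in> gpoints RR EE"
    then consider v where "v \<in> RR" "y' = GV v"
      | e \<mu> where "e \<in> EE" "0 < \<mu>" "\<mu> < 1" "y' = GE e \<mu>" unfolding gpoints_def by blast
    thus "\<exists>x\<in>schgrp HH. max (gdist EE fst edge_tgt y' (GV (act x h))) (gdist EE fst edge_tgt (GV (act x h)) y')
       \<le> ereal (real Mu + 1)"
    proof cases
      case 1
      obtain q W where W: "q \<in> Qs" "W \<in> schgrp HH"
        "vdist EE fst edge_tgt v (act W h) \<le> ereal (real Mu)" "vdist EE fst edge_tgt (act W h) v \<le> ereal (real Mu)"
        using near_vertex[OF 1(1)] by blast
      have "ereal (real Mu) \<le> ereal (real Mu + 1)" by simp
      thus ?thesis using W 1(2) by (intro bexI[of _ W]) (auto simp: max_def intro: order_trans)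
    next
      case 2
      obtain x a where e: "e = (x, a, x*a)" "x \<in> RR" "x*a \<in> RR" "a \<in> A"
        using 2(1) unfolding sch_edges_def by blast
      obtain q W where W: "q \<in> Qs" "W \<in> schgrp HH" "x = act W q"
        "vdist EE fst edge_tgt (act W h) x \<le> ereal (real Mu)"
        using near_vertex[OF e(2)] by blast
      have t: "vdist EE fst edge_tgt (x*a) (act W h) \<le> ereal (real Mu)"
        using near_edge_tgt[OF W(1) W(2) e(4)] e(3) W(3) by simp
      have g1: "gdist EE fst edge_tgt y' (GV (act W h)) \<le> ereal (real Mu + 1)"
      proof -
        have "gdist EE fst edge_tgt y' (GV (act W h)) = ereal (1 - \<mu>) + vdist EE fst edge_tgt (x*a) (act W h)"
          using 2(4) e(1) by (simp add: edge_tgt_def)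
        also have "\<dots> \<le> ereal (1 - \<mu>) + ereal (real Mu)" using t by (rule add_left_mono)
        also have "\<dots> \<le> ereal (real Mu + 1)" using 2(2) by simp
        finally show ?thesis .
      qed
      have g2: "gdist EE fst edge_tgt (GV (act W h)) y' \<le> ereal (real Mu + 1)"
      proof -
        have "gdist EE fst edge_tgt (GV (act W h)) y' = vdist EE fst edge_tgt (act W h) x + ereal \<mu>"
          using 2(4) e(1) by simp
        also have "\<dots> \<le> ereal (real Mu) + ereal \<mu>" using W(4) by (rule add_right_mono)
        also have "\<dots> \<le> ereal (real Mu + 1)" using 2(3) by simp
        finally show ?thesis .
      qed
      show ?thesis using g1 g2 W(2) by (intro bexI[of _ W]) auto
    qed
  qed
  show ?thesis
    unfolding quasi_isometry_def
    apply (rule conjI[OF s1])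
    apply (rule exI[of _ "real (max 1 (max CC Kmax))"])
    apply (rule exI[of _ "real Kmax + 1"])
    apply (rule exI[of _ "real Mu + 1"])
    by (intro conjI; (rule s2 s3 s4 s5 s6))
qed

end


theorem theorem5p2:
  fixes A :: "'a::monoid_mult set" and H :: "'a set" and h :: 'a
  assumes "finite A"
    and "\<forall>m::'a. \<exists>ws. set ws \<subseteq> A \<and> m = prod_list ws"
    and "H = Hclass h"
    and "finite (Hclass ` Rclass h)"
  shows "(\<exists>S. finite S \<and> sch_generates H S) \<and>
         (\<forall>S. finite S \<and> sch_generates H S \<longrightarrow>
            (\<exists>f. quasi_isometry (schgrp H) (word_dist H S)
                   (gpoints (Rclass h) (sch_edges A (Rclass h)))
                   (gdist (sch_edges A (Rclass h)) fst edge_tgt) f))"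
proof -
  interpret G: grp_fin A h using assms(1,2,4) by (unfold_locales) auto
  have P1: "\<exists>S. finite S \<and> sch_generates H S"
    using G.S0_fin G.generates assms(3) by blast
  have P2: "\<forall>S. finite S \<and> sch_generates H S \<longrightarrow>
            (\<exists>f. quasi_isometry (schgrp H) (word_dist H S)
                   (gpoints (Rclass h) (sch_edges A (Rclass h)))
                   (gdist (sch_edges A (Rclass h)) fst edge_tgt) f)"
  proof (intro allI impI)
    fix S assume S: "finite S \<and> sch_generates H S"
    interpret GS: grp_S A h S using S assms(3) by (unfold_locales) auto
    show "\<exists>f. quasi_isometry (schgrp H) (word_dist H S)
                   (gpoints (Rclass h) (sch_edges A (Rclass h)))
                   (gdist (sch_edges A (Rclass h)) fst edge_tgt) f"
      using GS.qi assms(3) by blast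
  qed
  show ?thesis using P1 P2 by blast
qed

end
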